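(* In the dynamic weighted storage system described in the context, the weight reassignment protocol is live: servers can change their weights over time, i.e., the view installed in the system keeps being changed to its successor view, so that new weights (obtained by pairwise weight reassignments) take effect.
   Context: System: a finite set $S=\{s_1,\dots,s_n\}$ of servers and an infinite set of clients; every process knows $S$; processes communicate over reliable links by message passing; the system is asynchronous (no bounds on processing times or message delays, local clocks are unsynchronized counters); processes fail only by crashing (a process is correct if it does not crash); at most $f$ servers crash and $2f+1\le n$. Views: the system passes through a sequence of views $v_0,v_1,\dots$ with $v_{k+1}=v_k.succ$; $v<w$ means $w$ is obtained from $v$ by applying $succ$ one or more times. Each server $s$ has a current view $s.cview$ (initially $v_0$) and a weight in every view; all weights in $v_0$ equal $1$; in every view every server's weight lies strictly between $\mathbb{wl}=n/(2(n-f))$ and $\mathbb{wu}=n/(2f)$, and the total weight of all servers is at most $n$. A weighted majority (quorum) for view $v$ is a set of servers whose weights in $v$ sum to more than $n/2$. The number of views ever requested is finite. Weights for a view $v.succ$ are changed only by pairwise weight reassignments (a server moves an amount $\epsilon$ of its weight for $v.succ$ to a lower-latency server, respecting the bounds $\mathbb{wl},\mathbb{wu}$) made before the involved servers start changing to $v.succ$. View changer (run by each server $s$ with $s.cview=v$): when a local timeout for $v$ expires, $s$ sends $\langle\text{change\_view},v.succ\rangle$ to all servers. Once $s$ has received or sent a change\_view message for $v.succ$, it: forwards $\langle\text{change\_view},v.succ\rangle$ if not already sent; disables read/write operations; stops accepting pairwise reassignments for $v.succ$; sends $\langle\text{state\_update},(val,ts,cid),v,w\rangle$ to all servers, where $(ts,cid,val)$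 is its register state and $w$ its weight in $v$ (at this point $s$ has uninstalled $v$); waits until it has state\_update messages for view $v$ whose weights sum to more than $n/2$; sets its register to the value with the lexicographically largest $(ts,cid)$ among them; sets $s.cview\leftarrow v.succ$ (it installs $v.succ$), restarts the timeout and re-enables read/write operations. A server requests to change its view by sending change\_view. A view $v$ is installed in the system once some server installs $v$ and no server has a current view greater than $v$; $lastview$ denotes the last view installed in the system, and a view is uninstalled from the system when its successor is installed. *)

theory Defs
  imports Complex_Main
begin

(* ---------- Operational model of the dynamic weighted storage system ----------
   Servers: the elements of a finite type 's (so S = UNIV, n = CARD('s)).
   Views: v_k is represented by k :: nat, v.succ = Suc v, v_0 = 0.
   Register state: (val, ts, cid). *)

type_synonym 'val regst = "'val \<times> nat \<times> nat"

datatype 'val msg =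
    ChangeView nat
  | StateUpdate "'val regst" nat real       (* <state_update, (val,ts,cid), v, w> *)

record ('s, 'val) gstate =
  cview    :: "'s \<Rightarrow> nat"
  changing :: "'s \<Rightarrow> bool"     (* has received/sent change_view for cview.succ *)
  crashed  :: "'s \<Rightarrow> bool"
  reg      :: "'s \<Rightarrow> 'val regst"
  sent     :: "('s \<times> 's \<times> 'val msg) set"      (* (sender, receiver, message) *)
  rcvd     :: "'s \<Rightarrow> ('s \<times> 'val msg) set"  (* (sender, message) received *)

definition lex_le :: "nat \<times> nat \<Rightarrow> nat \<times> nat \<Rightarrow> bool" where
  "lex_le a b \<longleftrightarrow> fst a < fst b \<or> (fst a = fst b \<and> snd a \<le> snd b)"

definition wl :: "nat \<Rightarrow> nat \<Rightarrow> real" where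
  "wl n f = real n / (2 * (real n - real f))"

definition wu :: "nat \<Rightarrow> nat \<Rightarrow> real" where
  "wu n f = real n / (2 * real f)"

(* every weight strictly between wl and wu (wu = +infinity when f = 0), total at most n *)
definition weight_ok :: "nat \<Rightarrow> ('s::finite \<Rightarrow> real) \<Rightarrow> bool" where
  "weight_ok f w \<longleftrightarrow>
     (\<forall>s. wl (card (UNIV :: 's set)) f < w s \<and> (f = 0 \<or> w s < wu (card (UNIV :: 's set)) f)) \<and>
     sum w UNIV \<le> real (card (UNIV :: 's set))"

definition reassign_step :: "nat \<Rightarrow> ('s::finite \<Rightarrow> real) \<Rightarrow> ('s \<Rightarrow> real) \<Rightarrow> bool" where
  "reassign_step f w w' \<longleftrightarrow>
     (\<exists>a b eps. a \<noteq> b \<and> eps > 0 \<and> w' = w(a := w a - eps, b := w b + eps) \<and> weight_ok f w')"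

definition init_state :: "'val regst \<Rightarrow> ('s, 'val) gstate" where
  "init_state r0 = \<lparr> cview = (\<lambda>_. 0), changing = (\<lambda>_. False), crashed = (\<lambda>_. False),
                     reg = (\<lambda>_. r0), sent = {}, rcvd = (\<lambda>_. {}) \<rparr>"

(* s starts changing to (cview s).succ: sends/forwards change_view, disables read/write,
   stops accepting reassignments and sends its state_update for its current view *)
definition start_change ::
  "(nat \<Rightarrow> 's \<Rightarrow> real) \<Rightarrow> ('s, 'val) gstate \<Rightarrow> 's \<Rightarrow> ('s, 'val) gstate" where
  "start_change W st s =
     st\<lparr> changing := (changing st)(s := True),
         sent := sent st
                 \<union> {(s, q, ChangeView (Suc (cview st s))) | q. True}
                 \<union> {(s, q, StateUpdate (reg st s) (cview st s) (W (cview st s) s)) | q. True} \<rparr>"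

definition su_quorum :: "('s::finite, 'val) gstate \<Rightarrow> 's \<Rightarrow> nat \<Rightarrow> ('s \<times> 'val regst \<times> real) set \<Rightarrow> bool" where
  "su_quorum st s v M \<longleftrightarrow>
     finite M \<and> M \<subseteq> {(p, r, w). (p, StateUpdate r v w) \<in> rcvd st s} \<and>
     (\<Sum>(p, r, w)\<in>M. w) > real (card (UNIV :: 's set)) / 2"

inductive step :: "(nat \<Rightarrow> 's::finite \<Rightarrow> real) \<Rightarrow> ('s, 'val) gstate \<Rightarrow> ('s, 'val) gstate \<Rightarrow> bool"
  for W where
  crash_step: "\<not> crashed st s \<Longrightarrow> step W st (st\<lparr> crashed := (crashed st)(s := True) \<rparr>)"
| deliver_step: "(p, q, m) \<in> sent st \<Longrightarrow> \<not> crashed st q \<Longrightarrow>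
     step W st (st\<lparr> rcvd := (rcvd st)(q := insert (p, m) (rcvd st q)) \<rparr>)"
  (* client read/write operations (abstracted): update of the register to a state with
     a not smaller (ts,cid), only while read/write operations are enabled *)
| rw_op: "\<not> crashed st s \<Longrightarrow> \<not> changing st s \<Longrightarrow> lex_le (snd (reg st s)) (snd r) \<Longrightarrow>
     step W st (st\<lparr> reg := (reg st)(s := r) \<rparr>)"
  (* the local timeout for the current view expires (happens at arbitrary times) *)
| timeout_step: "\<not> crashed st s \<Longrightarrow> \<not> changing st s \<Longrightarrow> step W st (start_change W st s)"
| recv_change: "\<not> crashed st s \<Longrightarrow> \<not> changing st s \<Longrightarrow>
     (p, ChangeView (Suc (cview st s))) \<in> rcvd st s \<Longrightarrow> step W st (start_change W st s)"
| install_step: "\<not> crashed st s \<Longrightarrow> changing st s \<Longrightarrow> su_quorum st s (cview st s) M \<Longrightarrow>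
     (p0, r, w0) \<in> M \<Longrightarrow> (\<forall>(p, r', w) \<in> M. lex_le (snd r') (snd r)) \<Longrightarrow>
     step W st (st\<lparr> reg := (reg st)(s := r), cview := (cview st)(s := Suc (cview st s)),
                    changing := (changing st)(s := False) \<rparr>)"

definition execution :: "(nat \<Rightarrow> 's::finite \<Rightarrow> real) \<Rightarrow> 'val regst \<Rightarrow> (nat \<Rightarrow> ('s, 'val) gstate) \<Rightarrow> bool" where
  "execution W r0 \<sigma> \<longleftrightarrow> \<sigma> 0 = init_state r0 \<and>
     (\<forall>i. \<sigma> (Suc i) = \<sigma> i \<or> step W (\<sigma> i) (\<sigma> (Suc i)))"

definition correct :: "(nat \<Rightarrow> ('s, 'val) gstate) \<Rightarrow> 's \<Rightarrow> bool" where
  "correct \<sigma> s \<longleftrightarrow> (\<forall>t. \<not> crashed (\<sigma> t) s)"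

definition en_recv_change :: "('s, 'val) gstate \<Rightarrow> 's \<Rightarrow> bool" where
  "en_recv_change st s \<longleftrightarrow> \<not> crashed st s \<and> \<not> changing st s \<and>
     (\<exists>p. (p, ChangeView (Suc (cview st s))) \<in> rcvd st s)"

definition en_install :: "('s::finite, 'val) gstate \<Rightarrow> 's \<Rightarrow> bool" where
  "en_install st s \<longleftrightarrow> \<not> crashed st s \<and> changing st s \<and> (\<exists>M. M \<noteq> {} \<and> su_quorum st s (cview st s) M)"

(* fairness: reliable links between correct processes, and correct servers eventually
   perform their continuously enabled protocol actions (weak fairness) *)
definition fair :: "(nat \<Rightarrow> ('s::finite, 'val) gstate) \<Rightarrow> bool" where
  "fair \<sigma> \<longleftrightarrow>
     (\<forall>t p q m. (p, q, m) \<in> sent (\<sigma> t) \<and> correct \<sigma> p \<and> correct \<sigma> q \<longrightarrow>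
                (\<exists>t'. (p, m) \<in> rcvd (\<sigma> t') q)) \<and>
     (\<forall>s t. correct \<sigma> s \<and> en_recv_change (\<sigma> t) s \<longrightarrow> (\<exists>t'\<ge>t. \<not> en_recv_change (\<sigma> t') s)) \<and>
     (\<forall>s t. correct \<sigma> s \<and> en_install (\<sigma> t) s \<longrightarrow> (\<exists>t'\<ge>t. \<not> en_install (\<sigma> t') s))"

definition installed_in_system :: "('s, 'val) gstate \<Rightarrow> nat \<Rightarrow> bool" where
  "installed_in_system st w \<longleftrightarrow> (\<exists>s. cview st s = w) \<and> (\<forall>s. cview st s \<le> w)"

end

theory Submission
  imports Defs
begin

definition lvl :: "('s, 'val) gstate \<Rightarrow> 's \<Rightarrow> nat" where
  "lvl st p = cview st p + (if changing st p then 1 else 0)"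

definition inv :: "(nat \<Rightarrow> 's \<Rightarrow> real) \<Rightarrow> ('s, 'val) gstate \<Rightarrow> bool" where
  "inv W st \<longleftrightarrow>
    (\<forall>p q k. (p, q, ChangeView k) \<in> sent st \<longrightarrow> k \<le> lvl st p) \<and>
    (\<forall>p j q. 1 \<le> j \<and> j \<le> lvl st p \<longrightarrow> (p, q, ChangeView j) \<in> sent st) \<and>
    (\<forall>p u. u < lvl st p \<longrightarrow> (\<exists>r. \<forall>q. (p, q, StateUpdate r u (W u p)) \<in> sent st))"

lemma step_mono:
  assumes "step W st st'"
  shows "lvl st p \<le> lvl st' p \<and> cview st p \<le> cview st' p \<and> cview st' p \<le> Suc (cview st p)
         \<and> sent st \<subseteq> sent st' \<and> rcvd st p \<subseteq> rcvd st' p"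
  using assms by (cases rule: step.cases) (auto simp: lvl_def start_change_def)

lemma inv_start:
  assumes "inv W st" "\<not> changing st s"
  shows "inv W (start_change W st s)"
proof -
  have L: "lvl (start_change W st s) p = (if p = s then Suc (cview st s) else lvl st p)" for p
    using assms(2) by (simp add: lvl_def start_change_def)
  show ?thesis
    unfolding inv_def
  proof (intro conjI allI impI)
    fix p q k assume "(p, q, ChangeView k) \<in> sent (start_change W st s)"
    then have "(p, q, ChangeView k) \<in> sent st \<or> (p = s \<and> k = Suc (cview st s))"
      by (auto simp: start_change_def)
    moreover have "(p, q, ChangeView k) \<in> sent st \<Longrightarrow> k \<le> lvl st p"
      using assms(1) by (auto simp: inv_def)
    moreover have "lvl st p \<le> lvl (start_change W st s) p"
      using L[of p] assms(2) by (auto simp: lvl_def)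
    ultimately show "k \<le> lvl (start_change W st s) p"
      using L[of p] by fastforce
  next
    fix p j q assume "1 \<le> j \<and> j \<le> lvl (start_change W st s) p"
    then show "(p, q, ChangeView j) \<in> sent (start_change W st s)"
      using assms L[of p] by (cases "j = Suc (cview st s)")
        (auto simp: inv_def start_change_def lvl_def split: if_splits)
  next
    fix p u assume u: "u < lvl (start_change W st s) p"
    show "\<exists>r. \<forall>q. (p, q, StateUpdate r u (W u p)) \<in> sent (start_change W st s)"
    proof (cases "p = s \<and> u = cview st s")
      case True
      then have "\<forall>q. (p, q, StateUpdate (reg st s) u (W u p)) \<in> sent (start_change W st s)"
        by (auto simp: start_change_def)
      then show ?thesis by blast
    next
      case False
      then have "u < lvl st p" using u L[of p] assms(2) by (auto simp: lvl_def split: if_splits)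
      then obtain r where "\<forall>q. (p, q, StateUpdate r u (W u p)) \<in> sent st"
        using assms(1) unfolding inv_def by blast
      then have "\<forall>q. (p, q, StateUpdate r u (W u p)) \<in> sent (start_change W st s)"
        by (simp add: start_change_def)
      then show ?thesis by blast
    qed
  qed
qed

lemma step_inv:
  assumes "step W st st'" "inv W st"
  shows "inv W st'"
  using assms
proof (cases rule: step.cases)
  case (timeout_step s)
  then show ?thesis using inv_start assms by metis
next
  case (recv_change s p)
  then show ?thesis using inv_start assms by metis
next
  case (install_step s M p0 r w0)
  have "lvl st' x = lvl st x" for x using install_step by (auto simp: lvl_def)
  then show ?thesis using install_step assms(2) unfolding inv_def by simp
qed (auto simp: inv_def lvl_def)

lemma exec_inv:
  assumes "execution W r0 \<sigma>"
  shows "inv W (\<sigma> t)"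
proof (induction t)
  case 0
  then show ?case using assms by (simp add: execution_def init_state_def inv_def lvl_def)
next
  case (Suc t)
  then show ?case using assms step_inv unfolding execution_def by metis
qed

lemma exec_step_mono:
  assumes "execution W r0 \<sigma>"
  shows "lvl (\<sigma> i) p \<le> lvl (\<sigma> (Suc i)) p \<and> cview (\<sigma> i) p \<le> cview (\<sigma> (Suc i)) p
     \<and> cview (\<sigma> (Suc i)) p \<le> Suc (cview (\<sigma> i) p)
     \<and> sent (\<sigma> i) \<subseteq> sent (\<sigma> (Suc i)) \<and> rcvd (\<sigma> i) p \<subseteq> rcvd (\<sigma> (Suc i)) p"
  using assms step_mono[of W "\<sigma> i" "\<sigma> (Suc i)" p] unfolding execution_def
  by (metis order_refl le_SucI)

lemma exec_mono:
  assumes "execution W r0 \<sigma>" "t1 \<le> t2"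
  shows "lvl (\<sigma> t1) p \<le> lvl (\<sigma> t2) p \<and> cview (\<sigma> t1) p \<le> cview (\<sigma> t2) p
     \<and> sent (\<sigma> t1) \<subseteq> sent (\<sigma> t2) \<and> rcvd (\<sigma> t1) p \<subseteq> rcvd (\<sigma> t2) p"
proof -
  have a: "lvl (\<sigma> t1) p \<le> lvl (\<sigma> t2) p"
    by (rule lift_Suc_mono_le[where f = "\<lambda>i. lvl (\<sigma> i) p"]) (use exec_step_mono[OF assms(1)] assms(2) in auto)
  have b: "cview (\<sigma> t1) p \<le> cview (\<sigma> t2) p"
    by (rule lift_Suc_mono_le[where f = "\<lambda>i. cview (\<sigma> i) p"]) (use exec_step_mono[OF assms(1)] assms(2) in auto)
  have c: "sent (\<sigma> t1) \<subseteq> sent (\<sigma> t2)"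
    by (rule lift_Suc_mono_le[where f = "\<lambda>i. sent (\<sigma> i)"]) (use exec_step_mono[OF assms(1)] assms(2) in auto)
  have d: "rcvd (\<sigma> t1) p \<subseteq> rcvd (\<sigma> t2) p"
    by (rule lift_Suc_mono_le[where f = "\<lambda>i. rcvd (\<sigma> i) p"]) (use exec_step_mono[OF assms(1)] assms(2) in auto)
  show ?thesis using a b c d by blast
qed

lemma quorum_sum:
  fixes w :: "'s::finite \<Rightarrow> real" and C :: "'s set"
  assumes nf: "2 * f + 1 \<le> card (UNIV :: 's set)" and ok: "weight_ok f w"
    and cc: "card (- C) \<le> f"
  shows "(\<Sum>x\<in>C. w x) > real (card (UNIV :: 's set)) / 2" and "C \<noteq> {}"
proof -
  define n where "n = card (UNIV :: 's set)"
  have cardC: "card C = n - card (- C)"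
  proof -
    have "card (C \<union> - C) = card C + card (- C)"
      by (rule card_Un_disjoint) auto
    moreover have "C \<union> - C = UNIV" by auto
    ultimately show ?thesis using n_def by simp
  qed
  hence cC: "real (card C) \<ge> real n - real f" using cc nf n_def by linarith
  have nfpos: "real n - real f > 0" using nf n_def by linarith
  show ne: "C \<noteq> {}" using cardC cc nf n_def by auto
  have lb: "\<forall>x\<in>C. wl n f < w x" using ok n_def by (auto simp: weight_ok_def)
  have "(\<Sum>x\<in>C. wl n f) < (\<Sum>x\<in>C. w x)"
    by (rule sum_strict_mono) (use ne lb in auto)
  moreover have "(\<Sum>x\<in>C. wl n f) = real (card C) * (real n / (2 * (real n - real f)))"
    by (simp add: wl_def)
  moreover have "real (card C) * (real n / (2 * (real n - real f))) \<ge> real n / 2"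
  proof -
    have "real (card C) * (real n / (2 * (real n - real f))) \<ge> (real n - real f) * (real n / (2 * (real n - real f)))"
      by (rule mult_right_mono) (use cC nfpos in auto)
    also have "(real n - real f) * (real n / (2 * (real n - real f))) = real n / 2"
      using nfpos by (simp add: field_simps)
    finally show ?thesis .
  qed
  ultimately show "(\<Sum>x\<in>C. w x) > real (card (UNIV :: 's set)) / 2" using n_def by linarith
qed

lemma core:
  fixes W :: "nat \<Rightarrow> 's::finite \<Rightarrow> real" and \<sigma> :: "nat \<Rightarrow> ('s, 'val) gstate"
  assumes exec: "execution W r0 \<sigma>" and fr: "fair \<sigma>" and wok: "\<forall>u. weight_ok f (W u)"
    and nf: "2 * f + 1 \<le> card (UNIV :: 's set)" and cr: "card {x. \<exists>t'. crashed (\<sigma> t') x} \<le> f"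
    and cs: "correct \<sigma> s"
    and cv: "\<forall>j q. 1 \<le> j \<and> j \<le> Suc v \<longrightarrow> (s, q, ChangeView j) \<in> sent (\<sigma> t)"
  shows "u \<le> Suc v \<Longrightarrow> correct \<sigma> p \<Longrightarrow> \<exists>t'. u \<le> cview (\<sigma> t') p"
proof (induction u arbitrary: p)
  case 0
  then show ?case by auto
next
  case (Suc u)
  define C where "C = {x. correct \<sigma> x}"
  have negC: "- C = {x. \<exists>t'. crashed (\<sigma> t') x}" by (auto simp: C_def correct_def)
  have Cne: "C \<noteq> {}" using quorum_sum[OF nf wok[rule_format, of 0], of C] negC cr by simp
  have qs: "(\<Sum>x\<in>C. W u x) > real (card (UNIV :: 's set)) / 2"
    using quorum_sum[OF nf wok[rule_format, of u], of C] negC cr by simp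
  have links: "\<And>t p q m. (p, q, m) \<in> sent (\<sigma> t) \<Longrightarrow> correct \<sigma> p \<Longrightarrow> correct \<sigma> q \<Longrightarrow>
      (\<exists>t'. (p, m) \<in> rcvd (\<sigma> t') q)" using fr unfolding fair_def by blast
  have frc: "\<And>s t. correct \<sigma> s \<Longrightarrow> en_recv_change (\<sigma> t) s \<Longrightarrow> (\<exists>t'\<ge>t. \<not> en_recv_change (\<sigma> t') s)"
    using fr unfolding fair_def by blast
  have fri: "\<And>s t. correct \<sigma> s \<Longrightarrow> en_install (\<sigma> t) s \<Longrightarrow> (\<exists>t'\<ge>t. \<not> en_install (\<sigma> t') s)"
    using fr unfolding fair_def by blast
  have B: "\<forall>x. correct \<sigma> x \<longrightarrow> (\<exists>t'. Suc u \<le> lvl (\<sigma> t') x)"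
  proof (intro allI impI)
    fix x assume xc: "correct \<sigma> x"
    obtain t1 where t1: "u \<le> cview (\<sigma> t1) x" using Suc.IH[of x] Suc.prems xc by auto
    show "\<exists>t'. Suc u \<le> lvl (\<sigma> t') x"
    proof (rule ccontr)
      assume H: "\<not> (\<exists>t'. Suc u \<le> lvl (\<sigma> t') x)"
      have "(s, x, ChangeView (Suc u)) \<in> sent (\<sigma> t)" using cv Suc.prems by auto
      then obtain t2 where t2: "(s, ChangeView (Suc u)) \<in> rcvd (\<sigma> t2) x" using links cs xc by blast
      have en: "en_recv_change (\<sigma> t') x" if "max t1 t2 \<le> t'" for t'
      proof -
        have m1: "cview (\<sigma> t1) x \<le> cview (\<sigma> t') x" using exec_mono[OF exec, of t1 t' x] that by auto
        have m2: "rcvd (\<sigma> t2) x \<subseteq> rcvd (\<sigma> t') x" using exec_mono[OF exec, of t2 t' x] that by auto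
        have "lvl (\<sigma> t') x \<le> u" using H not_less_eq_eq by blast
        then have "cview (\<sigma> t') x = u \<and> \<not> changing (\<sigma> t') x" using m1 t1 by (auto simp: lvl_def split: if_splits)
        then show ?thesis using m2 t2 xc by (auto simp: en_recv_change_def correct_def)
      qed
      obtain t' where "t' \<ge> max t1 t2" "\<not> en_recv_change (\<sigma> t') x"
        using frc[OF xc en[of "max t1 t2"]] by auto
      then show False using en by blast
    qed
  qed
  show ?case
  proof (rule ccontr)
    assume H: "\<not> (\<exists>t'. Suc u \<le> cview (\<sigma> t') p)"
    obtain t1 where t1: "Suc u \<le> lvl (\<sigma> t1) p" using B Suc.prems by auto
    have "\<forall>x\<in>C. \<exists>r t'. (x, StateUpdate r u (W u x)) \<in> rcvd (\<sigma> t') p"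
    proof
      fix x assume "x \<in> C"
      then have xc: "correct \<sigma> x" by (simp add: C_def)
      obtain tx where "Suc u \<le> lvl (\<sigma> tx) x" using B xc by auto
      then obtain r where "\<forall>q. (x, q, StateUpdate r u (W u x)) \<in> sent (\<sigma> tx)"
        using exec_inv[OF exec, of tx] unfolding inv_def by (meson Suc_le_lessD)
      then show "\<exists>r t'. (x, StateUpdate r u (W u x)) \<in> rcvd (\<sigma> t') p"
        using links xc Suc.prems(2) by blast
    qed
    then obtain R where R: "\<forall>x\<in>C. \<exists>t'. (x, StateUpdate (R x) u (W u x)) \<in> rcvd (\<sigma> t') p"
      by metis
    have ev: "\<forall>x\<in>C. eventually (\<lambda>t'. (x, StateUpdate (R x) u (W u x)) \<in> rcvd (\<sigma> t') p) sequentially"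
    proof
      fix x assume "x \<in> C"
      then obtain tx where "(x, StateUpdate (R x) u (W u x)) \<in> rcvd (\<sigma> tx) p" using R by blast
      then show "eventually (\<lambda>t'. (x, StateUpdate (R x) u (W u x)) \<in> rcvd (\<sigma> t') p) sequentially"
        unfolding eventually_sequentially using exec_mono[OF exec] by blast
    qed
    have "eventually (\<lambda>t'. \<forall>x\<in>C. (x, StateUpdate (R x) u (W u x)) \<in> rcvd (\<sigma> t') p) sequentially"
      by (rule eventually_ball_finite) (use ev in auto)
    then obtain T where T: "\<forall>t'\<ge>T. \<forall>x\<in>C. (x, StateUpdate (R x) u (W u x)) \<in> rcvd (\<sigma> t') p"
      by (auto simp: eventually_sequentially)
    have en: "en_install (\<sigma> t') p" if "max T t1 \<le> t'" for t'
    proof -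
      have "lvl (\<sigma> t1) p \<le> lvl (\<sigma> t') p" using exec_mono[OF exec, of t1 t' p] that by auto
      moreover have "cview (\<sigma> t') p \<le> u" using H not_less_eq_eq by blast
      ultimately have cu: "cview (\<sigma> t') p = u" "changing (\<sigma> t') p"
        using t1 by (auto simp: lvl_def split: if_splits)
      define M where "M = (\<lambda>x. (x, R x, W u x)) ` C"
      have "M \<noteq> {}" using Cne M_def by auto
      moreover have "(\<Sum>(p, r, w)\<in>M. w) = (\<Sum>x\<in>C. W u x)"
        unfolding M_def by (subst sum.reindex) (auto simp: inj_on_def)
      moreover have "M \<subseteq> {(q, r, w). (q, StateUpdate r u w) \<in> rcvd (\<sigma> t') p}"
        using T that unfolding M_def by auto
      ultimately have "M \<noteq> {} \<and> su_quorum (\<sigma> t') p (cview (\<sigma> t') p) M"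
        using qs cu unfolding su_quorum_def M_def by auto
      then show ?thesis using cu Suc.prems(2) unfolding en_install_def correct_def by blast
    qed
    obtain t' where "t' \<ge> max T t1" "\<not> en_install (\<sigma> t') p"
      using fri[OF Suc.prems(2) en[of "max T t1"]] by auto
    then show False using en by blast
  qed
qed

theorem theorem1:
  fixes W :: "nat \<Rightarrow> 's::finite \<Rightarrow> real"
    and f :: nat
    and r0 :: "'val regst"
    and \<sigma> :: "nat \<Rightarrow> ('s, 'val) gstate"
    and s q :: 's and v t :: nat
  assumes "2 * f + 1 \<le> card (UNIV :: 's set)"
    and "\<forall>x. W 0 x = 1"
    and "\<forall>u. weight_ok f (W u)"
    and "\<forall>u. (reassign_step f)\<^sup>*\<^sup>* (W u) (W (Suc u))"
    and "execution W r0 \<sigma>"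
    and "fair \<sigma>"
    and "card {x. \<exists>t'. crashed (\<sigma> t') x} \<le> f"
    and "finite {u. \<exists>t' x y. (x, y, ChangeView u) \<in> sent (\<sigma> t')}"
    and "correct \<sigma> s"
    and "(s, q, ChangeView (Suc v)) \<in> sent (\<sigma> t)"
  shows "\<exists>t'. installed_in_system (\<sigma> t') (Suc v)"
proof -
  note exec = assms(5)
  have iv: "inv W (\<sigma> t)" using exec_inv[OF exec] .
  have "Suc v \<le> lvl (\<sigma> t) s" using iv assms(10) unfolding inv_def by blast
  then have cv: "\<forall>j q. 1 \<le> j \<and> j \<le> Suc v \<longrightarrow> (s, q, ChangeView j) \<in> sent (\<sigma> t)"
    using iv unfolding inv_def by auto
  have "\<exists>t'. Suc v \<le> cview (\<sigma> t') s"
    using core[OF exec assms(6) assms(3) assms(1) assms(7) assms(9) cv, of "Suc v" s] assms(9) by simp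
  then have ex: "\<exists>t0. \<exists>x. Suc v \<le> cview (\<sigma> t0) x" by blast
  obtain t0 where P0: "\<exists>x. Suc v \<le> cview (\<sigma> t0) x"
    and least: "\<And>t'. t' < t0 \<Longrightarrow> \<not> (\<exists>x. Suc v \<le> cview (\<sigma> t') x)"
    using exists_least_iff[THEN iffD1, OF ex] by blast
  have "t0 \<noteq> 0"
  proof
    assume "t0 = 0"
    then show False using P0 exec by (auto simp: execution_def init_state_def)
  qed
  then obtain i where i: "t0 = Suc i" using not0_implies_Suc by blast
  have le: "cview (\<sigma> t0) x \<le> Suc v" for x
    using least[of i] i exec_step_mono[OF exec, of i x] by (metis lessI not_less_eq_eq order_trans Suc_le_mono)
  obtain x where "Suc v \<le> cview (\<sigma> t0) x" using P0 by blast
  then have "cview (\<sigma> t0) x = Suc v" using le[of x] by simp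
  then show ?thesis using le unfolding installed_in_system_def by blast
qed

end
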